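(* Consider the stochastic MPC scheme described in the context: the system $x(k+1)=Ax(k)+Bu(k)+w(k)$ under the control law $u(k)=Ke_0(k)+v_0^*(k)$ resulting from problem $(\mathcal{P}_k)$ (assumed feasible at the time steps considered), with nominal update $z_0(k)=z_1(k-1)$, $z(0)=x(0)$. Then, conditioned on $x(0)$, the predicted error at time $k$ has the same distribution as the closed-loop error, i.e. $e_i(k)\overset{d}{=}e(k+i)$ for $0\le i\le N$, where $e(k)=x(k)-z(k)$ with $z(k)=z_0(k)$.
   Context: System: $x(k+1)=Ax(k)+Bu(k)+w(k)$ with $x(k)\in\mathbb{R}^{n_x}$, $u(k)\in\mathbb{R}^{n_u}$, over a finite horizon $\bar N$; the disturbance sequence $W=[w(0)^\top,\dots,w(\bar N)^\top]^\top$ is a random vector with distribution $\mathcal{D}^W$ (not necessarily i.i.d. or zero mean). $\mathcal{X},\mathcal{U}$ convex sets; $\mathcal{A}\ominus\mathcal{B}=\{a\in\mathcal{A}: a+b\in\mathcal{A}\ \forall b\in\mathcal{B}\}$. A fixed gain $K$ is given; $\mathcal{R}^x_k,\mathcal{R}^u_k$ ($0\le k\le\bar N$) are given sets (probabilistic reachable sets used for tightening) and $\mathcal{Z}_f$ a terminal set. Problem $(\mathcal{P}_k)$ at time $k$: minimize over $v_0,\dots,v_{N-1}$ the cost $\mathbb{E}_{W_k}\big(l_f(x_N)+\sum_{i=0}^{N-1}l_{k+i}(x_i,u_i)\big)$ subject to $x_i=z_i+e_i$, $u_i=Ke_i+v_i$, $z_{i+1}=Az_i+Bv_i$, $e_{i+1}=(A+BK)e_i+w_i$,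 where $W_k=[w_0^\top,\dots,w_N^\top]^\top$ has the conditional distribution of $[w(k)^\top,\dots,w(k+N)^\top]^\top$ given the realized $[w(0)^\top,\dots,w(k-1)^\top]^\top$; constraints $z_i\in\mathcal{X}\ominus\mathcal{R}^x_{i+k}$, $v_i\in\mathcal{U}\ominus\mathcal{R}^u_{i+k}$ ($i=0,\dots,N-1$), $z_N\in\mathcal{Z}_f$; initialization $x_0=x(k)$, $z_0=z_1(k-1)$ (with $z_0(0)=x(0)$), $e_0=x_0-z_0$. Subscript quantities with argument $(k)$, e.g. $e_i(k)$, denote the predicted quantities in problem $(\mathcal{P}_k)$. The applied input is $u(k)=Ke_0(k)+v_0^*(k)$ with $v^*(k)$ optimal for $(\mathcal{P}_k)$. *)

theory Defs
  imports "HOL-Probability.Probability"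
begin

definition pdiff :: "'v::plus set \<Rightarrow> 'v set \<Rightarrow> 'v set" where
  "pdiff S T = {a \<in> S. \<forall>b\<in>T. a + b \<in> S}"

fun zpred :: "real^'n^'n \<Rightarrow> real^'m^'n \<Rightarrow> real^'n \<Rightarrow> (nat \<Rightarrow> real^'m) \<Rightarrow> nat \<Rightarrow> real^'n" where
  "zpred A B z0 v 0 = z0"
| "zpred A B z0 v (Suc i) = A *v zpred A B z0 v i + B *v v i"

fun epred :: "real^'n^'n \<Rightarrow> real^'m^'n \<Rightarrow> real^'n^'m \<Rightarrow> real^'n \<Rightarrow> (nat \<Rightarrow> real^'n) \<Rightarrow> nat \<Rightarrow> real^'n" where
  "epred A B K e0 Wk 0 = e0"
| "epred A B K e0 Wk (Suc i) = (A + B ** K) *v epred A B K e0 Wk i + Wk i"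

definition mpc_feasible ::
  "real^'n^'n \<Rightarrow> real^'m^'n \<Rightarrow> (real^'n) set \<Rightarrow> (real^'m) set \<Rightarrow>
   (nat \<Rightarrow> (real^'n) set) \<Rightarrow> (nat \<Rightarrow> (real^'m) set) \<Rightarrow> (real^'n) set \<Rightarrow>
   nat \<Rightarrow> nat \<Rightarrow> real^'n \<Rightarrow> (nat \<Rightarrow> real^'m) \<Rightarrow> bool" where
  "mpc_feasible A B X U Rx Ru Zf N k z0 v \<longleftrightarrow>
     (\<forall>i<N. zpred A B z0 v i \<in> pdiff X (Rx (i + k)) \<and> v i \<in> pdiff U (Ru (i + k)))
     \<and> zpred A B z0 v N \<in> Zf"

definition mpc_cost ::
  "real^'n^'n \<Rightarrow> real^'m^'n \<Rightarrow> real^'n^'m \<Rightarrow> (real^'n \<Rightarrow> real) \<Rightarrow>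
   (nat \<Rightarrow> real^'n \<Rightarrow> real^'m \<Rightarrow> real) \<Rightarrow> nat \<Rightarrow> nat \<Rightarrow> (nat \<Rightarrow> real^'n) measure \<Rightarrow>
   real^'n \<Rightarrow> real^'n \<Rightarrow> (nat \<Rightarrow> real^'m) \<Rightarrow> real" where
  "mpc_cost A B K lf l N k Q x0 z0 v =
     (\<integral>Wk. lf (zpred A B z0 v N + epred A B K (x0 - z0) Wk N)
          + (\<Sum>i<N. l (k + i) (zpred A B z0 v i + epred A B K (x0 - z0) Wk i)
                               (K *v epred A B K (x0 - z0) Wk i + v i)) \<partial>Q)"

definition mpc_optimal ::
  "real^'n^'n \<Rightarrow> real^'m^'n \<Rightarrow> real^'n^'m \<Rightarrow> (real^'n) set \<Rightarrow> (real^'m) set \<Rightarrow>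
   (nat \<Rightarrow> (real^'n) set) \<Rightarrow> (nat \<Rightarrow> (real^'m) set) \<Rightarrow> (real^'n) set \<Rightarrow>
   (real^'n \<Rightarrow> real) \<Rightarrow> (nat \<Rightarrow> real^'n \<Rightarrow> real^'m \<Rightarrow> real) \<Rightarrow>
   nat \<Rightarrow> nat \<Rightarrow> (nat \<Rightarrow> real^'n) measure \<Rightarrow> real^'n \<Rightarrow> real^'n \<Rightarrow> (nat \<Rightarrow> real^'m) \<Rightarrow> bool" where
  "mpc_optimal A B K X U Rx Ru Zf lf l N k Q x0 z0 v \<longleftrightarrow>
     mpc_feasible A B X U Rx Ru Zf N k z0 v \<and>
     (\<forall>v'. mpc_feasible A B X U Rx Ru Zf N k z0 v' \<longrightarrow>
        mpc_cost A B K lf l N k Q x0 z0 v \<le> mpc_cost A B K lf l N k Q x0 z0 v')"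

end

theory Submission
  imports Defs
begin


lemma mv_meas[measurable (raw)]:
  fixes C :: "real^'n^'m"
  assumes "f \<in> borel_measurable S"
  shows "(\<lambda>s. C *v f s) \<in> borel_measurable S"
  by (rule borel_measurable_continuous_on[OF _ assms]) (intro continuous_intros)

lemma epred_meas:
  fixes A :: "real^'n^'n" and B :: "real^'m^'n" and K :: "real^'n^'m"
  assumes "e0 \<in> borel_measurable S" and "\<And>j. j < i \<Longrightarrow> (\<lambda>s. Wk s j) \<in> borel_measurable S"
  shows "(\<lambda>s. epred A B K (e0 s) (Wk s) i) \<in> borel_measurable S"
  using assms(2)
proof (induction i)
  case 0 then show ?case using assms(1) by simp
next
  case (Suc i)
  have "(\<lambda>s. epred A B K (e0 s) (Wk s) i) \<in> borel_measurable S" using Suc by simp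
  moreover have "(\<lambda>s. Wk s i) \<in> borel_measurable S" using Suc by simp
  ultimately show ?case by (simp add: mv_meas borel_measurable_add)
qed

lemma epred_local:
  "(\<And>j. j < i \<Longrightarrow> Wk j = Wk' j) \<Longrightarrow> epred A B K e0 Wk i = epred A B K e0 Wk' i"
  by (induction i) auto

lemma epred_shift:
  "epred A B K e0 W (k + i) = epred A B K (epred A B K e0 W k) (\<lambda>j. W (k + j)) i"
  by (induction i) auto

theorem lemma1:
  fixes A :: "real^'n^'n" and B :: "real^'m^'n" and K :: "real^'n^'m"
    and M :: "'a measure"
    and W :: "'a \<Rightarrow> nat \<Rightarrow> real^'n"
    and \<kappa> :: "nat \<Rightarrow> (nat \<Rightarrow> real^'n) \<Rightarrow> (nat \<Rightarrow> real^'n) measure"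
    and x z :: "'a \<Rightarrow> nat \<Rightarrow> real^'n"
    and vs :: "'a \<Rightarrow> nat \<Rightarrow> nat \<Rightarrow> real^'m"
    and x0 :: "real^'n"
    and X Zf :: "(real^'n) set" and U :: "(real^'m) set"
    and Rx :: "nat \<Rightarrow> (real^'n) set" and Ru :: "nat \<Rightarrow> (real^'m) set"
    and lf :: "real^'n \<Rightarrow> real" and l :: "nat \<Rightarrow> real^'n \<Rightarrow> real^'m \<Rightarrow> real"
    and N Nbar :: nat
  assumes "prob_space M"
    and W_meas: "\<And>j. (\<lambda>\<omega>. W \<omega> j) \<in> borel_measurable M"
    and kernel: "\<And>k. k + N \<le> Nbar \<Longrightarrow>
       \<kappa> k \<in> measurable (PiM {..<k} (\<lambda>_. borel)) (prob_algebra (PiM {..N} (\<lambda>_. borel)))"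
    and cond_distr: "\<And>k. k + N \<le> Nbar \<Longrightarrow>
       distr M (PiM {..<k} (\<lambda>_. borel) \<Otimes>\<^sub>M PiM {..N} (\<lambda>_. borel))
         (\<lambda>\<omega>. (restrict (W \<omega>) {..<k}, restrict (\<lambda>i. W \<omega> (k + i)) {..N}))
       = distr M (PiM {..<k} (\<lambda>_. borel)) (\<lambda>\<omega>. restrict (W \<omega>) {..<k}) \<bind>
           (\<lambda>p. distr (\<kappa> k p) (PiM {..<k} (\<lambda>_. borel) \<Otimes>\<^sub>M PiM {..N} (\<lambda>_. borel))
                   (\<lambda>Wk. (p, Wk)))"
    and "convex X" and "convex U"
    and init: "\<And>\<omega>. \<omega> \<in> space M \<Longrightarrow> x \<omega> 0 = x0 \<and> z \<omega> 0 = x0"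
    and dyn: "\<And>\<omega> j. \<omega> \<in> space M \<Longrightarrow> j < Nbar \<Longrightarrow>
       x \<omega> (Suc j) = A *v x \<omega> j + B *v (K *v (x \<omega> j - z \<omega> j) + vs \<omega> j 0) + W \<omega> j
       \<and> z \<omega> (Suc j) = A *v z \<omega> j + B *v vs \<omega> j 0"
    and opt: "\<And>\<omega> k. \<omega> \<in> space M \<Longrightarrow> k + N \<le> Nbar \<Longrightarrow>
       mpc_optimal A B K X U Rx Ru Zf lf l N k (\<kappa> k (restrict (W \<omega>) {..<k}))
         (x \<omega> k) (z \<omega> k) (vs \<omega> k)"
    and "k + N \<le> Nbar" and "i \<le> N"
  shows "distr M borel (\<lambda>\<omega>. x \<omega> (k + i) - z \<omega> (k + i))
       = M \<bind> (\<lambda>\<omega>. distr (\<kappa> k (restrict (W \<omega>) {..<k})) borel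
                      (\<lambda>Wk. epred A B K (x \<omega> k - z \<omega> k) Wk i))"
proof -
  interpret prob_space M by fact
  define P where "P = PiM {..<k} (\<lambda>_. borel :: (real^'n) measure)"
  define Q where "Q = PiM {..N} (\<lambda>_. borel :: (real^'n) measure)"
  define f where "f p = epred A B K 0 p k" for p
  define g where "g = (\<lambda>(p, q). epred A B K (f p) q i)"
  define pw where "pw \<omega> = (restrict (W \<omega>) {..<k}, restrict (\<lambda>i. W \<omega> (k + i)) {..N})" for \<omega>
  have e_eq: "x \<omega> j - z \<omega> j = epred A B K 0 (W \<omega>) j" if "\<omega> \<in> space M" "j \<le> Nbar" for \<omega> j
    using that(2)
  proof (induction j)
    case 0 then show ?case using init[OF that(1)] by simp
  next
    case (Suc j)
    then have "j < Nbar" by simp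
    from dyn[OF that(1) this] Suc show ?case
      by (simp add: algebra_simps matrix_vector_mult_diff_distrib matrix_vector_mul_assoc
          matrix_vector_mult_add_rdistrib)
  qed
  have fk: "f (restrict (W \<omega>) {..<k}) = x \<omega> k - z \<omega> k" if "\<omega> \<in> space M" for \<omega>
    unfolding f_def using e_eq[OF that, of k] \<open>k + N \<le> Nbar\<close>
    by (auto intro: epred_local)
  have lhs: "x \<omega> (k + i) - z \<omega> (k + i) = g (pw \<omega>)" if "\<omega> \<in> space M" for \<omega>
  proof -
    have "x \<omega> (k + i) - z \<omega> (k + i) = epred A B K 0 (W \<omega>) (k + i)"
      using e_eq[OF that, of "k+i"] \<open>k + N \<le> Nbar\<close> \<open>i \<le> N\<close> by simp
    also have "\<dots> = epred A B K (x \<omega> k - z \<omega> k) (\<lambda>j. W \<omega> (k + j)) i"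
      using epred_shift e_eq[OF that, of k] \<open>k + N \<le> Nbar\<close> by simp
    also have "\<dots> = g (pw \<omega>)"
      unfolding g_def pw_def using fk[OF that] \<open>i \<le> N\<close>
      by (auto intro: epred_local)
    finally show ?thesis .
  qed
  have pw_meas: "pw \<in> measurable M (P \<Otimes>\<^sub>M Q)"
    unfolding pw_def P_def Q_def by (intro measurable_Pair measurable_restrict W_meas)
  have f_meas: "f \<in> borel_measurable P"
    unfolding f_def P_def
    by (rule epred_meas) (auto intro!: measurable_component_singleton)
  have g_meas: "g \<in> borel_measurable (P \<Otimes>\<^sub>M Q)"
    unfolding g_def
    apply (simp add: case_prod_beta')
    apply (rule epred_meas)
     apply (rule measurable_compose[OF measurable_fst f_meas])
    using \<open>i \<le> N\<close> unfolding Q_def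
    by (auto intro!: measurable_compose[OF measurable_snd] measurable_component_singleton)
  have kap: "\<kappa> k \<in> measurable P (subprob_algebra Q)"
    using kernel[OF \<open>k + N \<le> Nbar\<close>] unfolding P_def Q_def by (rule measurable_prob_algebraD)
  have ker2: "(\<lambda>p. distr (\<kappa> k p) (P \<Otimes>\<^sub>M Q) (Pair p)) \<in> measurable P (subprob_algebra (P \<Otimes>\<^sub>M Q))"
    by (rule measurable_distr2[OF _ kap]) simp
  have ker3: "(\<lambda>p. distr (\<kappa> k p) borel (\<lambda>q. g (p, q))) \<in> measurable P (subprob_algebra borel)"
    by (rule measurable_distr2[OF _ kap]) (simp add: g_meas)
  have rM: "(\<lambda>\<omega>. restrict (W \<omega>) {..<k}) \<in> measurable M P"
    unfolding P_def by (intro measurable_restrict W_meas)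
  have ne: "space M \<noteq> {}" by (rule not_empty)
  have neP: "space (distr M P (\<lambda>\<omega>. restrict (W \<omega>) {..<k})) \<noteq> {}" using ne measurable_space[OF rM] by auto
  have "distr M borel (\<lambda>\<omega>. x \<omega> (k + i) - z \<omega> (k + i)) = distr M borel (\<lambda>\<omega>. g (pw \<omega>))"
    by (rule distr_cong) (auto simp: lhs)
  also have "\<dots> = distr (distr M (P \<Otimes>\<^sub>M Q) pw) borel g"
    by (rule distr_distr[OF g_meas pw_meas, symmetric, unfolded comp_def])
  also have "distr M (P \<Otimes>\<^sub>M Q) pw = distr M P (\<lambda>\<omega>. restrict (W \<omega>) {..<k}) \<bind>
           (\<lambda>p. distr (\<kappa> k p) (P \<Otimes>\<^sub>M Q) (Pair p))"
    using cond_distr[OF \<open>k + N \<le> Nbar\<close>] unfolding pw_def P_def Q_def by simp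
  also have "distr (\<dots>) borel g = distr M P (\<lambda>\<omega>. restrict (W \<omega>) {..<k}) \<bind>
           (\<lambda>p. distr (distr (\<kappa> k p) (P \<Otimes>\<^sub>M Q) (Pair p)) borel g)"
    by (rule distr_bind[OF _ neP g_meas]) (simp add: measurable_cong_sets[OF sets_distr refl] ker2)
  also have "\<dots> = distr M P (\<lambda>\<omega>. restrict (W \<omega>) {..<k}) \<bind>
           (\<lambda>p. distr (\<kappa> k p) borel (\<lambda>q. g (p, q)))"
  proof (rule bind_cong[OF refl])
    fix p assume "p \<in> space (distr M P (\<lambda>\<omega>. restrict (W \<omega>) {..<k}))"
    then have p: "p \<in> space P" by simp
    have kp: "\<kappa> k p \<in> space (subprob_algebra Q)" using kap p by (rule measurable_space)
    then have sk: "sets (\<kappa> k p) = sets Q" by (simp add: space_subprob_algebra)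
    have pm: "Pair p \<in> measurable (\<kappa> k p) (P \<Otimes>\<^sub>M Q)"
      using p by (simp add: measurable_cong_sets[OF sk refl])
    show "distr (distr (\<kappa> k p) (P \<Otimes>\<^sub>M Q) (Pair p)) borel g = distr (\<kappa> k p) borel (\<lambda>q. g (p, q))"
      by (subst distr_distr[OF g_meas pm]) (simp add: comp_def)
  qed
  also have "\<dots> = M \<bind> (\<lambda>\<omega>. distr (\<kappa> k (restrict (W \<omega>) {..<k})) borel
                      (\<lambda>q. g (restrict (W \<omega>) {..<k}, q)))"
    by (rule bind_distr[OF rM ker3 ne])
  also have "\<dots> = M \<bind> (\<lambda>\<omega>. distr (\<kappa> k (restrict (W \<omega>) {..<k})) borel
                      (\<lambda>Wk. epred A B K (x \<omega> k - z \<omega> k) Wk i))"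
    by (rule bind_cong[OF refl], rule distr_cong) (auto simp: g_def fk)
  finally show ?thesis .
qed

end
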